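(* Let $\eta>0$, $\alpha\in(1/2,1)$, $\eta_i=\eta i^{-\alpha}$, and consider $$X_i=(1-\eta_i)X_{i-1}+\eta_ie_i,\ X_0=0;\qquad \widetilde X_i=(1-\eta_i)\widetilde X_{i-1}+\eta_i\widetilde e_i,\ \widetilde X_0=0,$$ where $e_i$ are i.i.d. with $\mathbb{E}e_i=0$, $\mathbb{E}e_i^2=\sigma_e^2$, $\mathbb{E}e_i^4<\infty$, and $\widetilde e_i\overset{\mathrm{i.i.d.}}{\sim}\mathcal N(0,\sigma_e^2)$. For integers $1\le t_i\le i$ let $$\widehat\sigma_n=\frac1n\sum_{i=1}^n\big[X_i^2+2X_i(X_{i-1}+\cdots+X_{t_i})\big],\qquad\widetilde\sigma_n=\frac1n\sum_{i=1}^n\big[\widetilde X_i^2+2\widetilde X_i(\widetilde X_{i-1}+\cdots+\widetilde X_{t_i})\big].$$ Then there exist constants $0\le C_1\le C_2<\infty$, not depending on $n$, such that $C_1\mathrm{Var}(\widetilde\sigma_n)\le\mathrm{Var}(\widehat\sigma_n)\le C_2\mathrm{Var}(\widetilde\sigma_n)$. *)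

theory Defs
  imports "HOL-Probability.Probability"
begin

definition step :: "real \<Rightarrow> real \<Rightarrow> nat \<Rightarrow> real" where
  "step \<eta> \<alpha> i = \<eta> * real i powr (- \<alpha>)"

fun Xseq :: "real \<Rightarrow> real \<Rightarrow> (nat \<Rightarrow> 'a \<Rightarrow> real) \<Rightarrow> nat \<Rightarrow> 'a \<Rightarrow> real" where
  "Xseq \<eta> \<alpha> e 0 \<omega> = 0"
| "Xseq \<eta> \<alpha> e (Suc i) \<omega> =
     (1 - step \<eta> \<alpha> (Suc i)) * Xseq \<eta> \<alpha> e i \<omega> + step \<eta> \<alpha> (Suc i) * e (Suc i) \<omega>"

definition sigma_est :: "real \<Rightarrow> real \<Rightarrow> (nat \<Rightarrow> nat) \<Rightarrow> (nat \<Rightarrow> 'a \<Rightarrow> real) \<Rightarrow> nat \<Rightarrow> 'a \<Rightarrow> real" where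
  "sigma_est \<eta> \<alpha> t e n \<omega> = (1 / real n) *
     (\<Sum>i=1..n. (Xseq \<eta> \<alpha> e i \<omega>)\<^sup>2
        + 2 * Xseq \<eta> \<alpha> e i \<omega> * (\<Sum>j\<in>{t i..<i}. Xseq \<eta> \<alpha> e j \<omega>))"

definition gaussian_rv :: "'b measure \<Rightarrow> ('b \<Rightarrow> real) \<Rightarrow> real \<Rightarrow> bool" where
  "gaussian_rv N X \<sigma> =
     (if \<sigma> = 0 then distr N lborel X = return lborel 0
      else distributed N lborel X (normal_density 0 \<sigma>))"

end

theory Submission
  imports Defs
begin

definition Pairs :: "nat set \<Rightarrow> (nat \<times> nat) set" where
  "Pairs I = Set.filter (\<lambda>(j,k). j \<le> k) (I \<times> I)"

definition wpair :: "(nat \<Rightarrow> nat \<Rightarrow> real) \<Rightarrow> nat \<times> nat \<Rightarrow> real" where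
  "wpair A p = (if fst p = snd p then A (fst p) (fst p) else A (fst p) (snd p) + A (snd p) (fst p))"

lemma finite_Pairs: "finite I \<Longrightarrow> finite (Pairs I)"
  unfolding Pairs_def by auto

lemma quad_split:
  fixes x :: "nat \<Rightarrow> real"
  assumes fin: "finite I"
  shows "(\<Sum>j\<in>I. \<Sum>k\<in>I. A j k * x j * x k) =
    (\<Sum>p\<in>Pairs I. wpair A p * (if fst p = snd p then (x (fst p))\<^sup>2 - s else x (fst p) * x (snd p)))
    + s * (\<Sum>j\<in>I. A j j)"
proof -
  define g where "g = (\<lambda>(j,k). A j k * x j * x k)"
  define D where "D = (\<lambda>j. (j,j)) ` I"
  define Lt where "Lt = Set.filter (\<lambda>(j,k). j < k) (I \<times> I)"
  define Gt where "Gt = Set.filter (\<lambda>(j,k). k < j) (I \<times> I)"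
  have fD: "finite D" "finite Lt" "finite Gt" using fin by (auto simp: D_def Lt_def Gt_def)
  have PU: "Pairs I = D \<union> Lt" "D \<inter> Lt = {}"
    by (auto simp: Pairs_def D_def Lt_def)
  have IU: "I \<times> I = Pairs I \<union> Gt" "Pairs I \<inter> Gt = {}"
    by (auto simp: Pairs_def Gt_def)
  have sumP: "\<And>h. sum h (Pairs I) = sum h D + sum h Lt"
    using PU fD by (simp add: sum.union_disjoint)
  have sumD: "\<And>h. sum h D = (\<Sum>j\<in>I. h (j,j))"
    unfolding D_def by (subst sum.reindex) (auto simp: inj_on_def)
  have GL: "Gt = prod.swap ` Lt" by (auto simp: Gt_def Lt_def image_iff)
  have sumG: "\<And>h. sum h Gt = (\<Sum>p\<in>Lt. h (snd p, fst p))"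
    unfolding GL by (subst sum.reindex) (auto simp: inj_on_def prod.swap_def)
  have "(\<Sum>j\<in>I. \<Sum>k\<in>I. A j k * x j * x k) = sum g (I \<times> I)"
    unfolding g_def by (simp add: sum.cartesian_product)
  also have "\<dots> = sum g (Pairs I) + sum g Gt"
    using IU fD fin by (simp add: sum.union_disjoint finite_Pairs)
  also have "\<dots> = (\<Sum>j\<in>I. A j j * x j * x j) + (\<Sum>p\<in>Lt. A (fst p) (snd p) * x (fst p) * x (snd p))
     + (\<Sum>p\<in>Lt. A (snd p) (fst p) * x (snd p) * x (fst p))"
    unfolding sumP sumD sumG g_def by (simp add: case_prod_beta)
  also have "\<dots> = (\<Sum>j\<in>I. A j j * ((x j)\<^sup>2 - s)) + (\<Sum>p\<in>Lt. wpair A p * (x (fst p) * x (snd p)))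
     + s * (\<Sum>j\<in>I. A j j)"
  proof -
    have "(\<Sum>p\<in>Lt. wpair A p * (x (fst p) * x (snd p))) = (\<Sum>p\<in>Lt. A (fst p) (snd p) * x (fst p) * x (snd p))
     + (\<Sum>p\<in>Lt. A (snd p) (fst p) * x (snd p) * x (fst p))"
      by (subst sum.distrib[symmetric], rule sum.cong) (auto simp: wpair_def Lt_def algebra_simps)
    moreover have "(\<Sum>j\<in>I. A j j * ((x j)\<^sup>2 - s)) + s * (\<Sum>j\<in>I. A j j) = (\<Sum>j\<in>I. A j j * x j * x j)"
      by (simp add: sum_distrib_left sum.distrib[symmetric] algebra_simps power2_eq_square sum_subtractf)
    ultimately show ?thesis by simp
  qed
  also have "\<dots> = (\<Sum>p\<in>Pairs I. wpair A p * (if fst p = snd p then (x (fst p))\<^sup>2 - s else x (fst p) * x (snd p)))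
    + s * (\<Sum>j\<in>I. A j j)"
    unfolding sumP sumD
    by (simp add: wpair_def, rule sum.cong) (auto simp: Lt_def)
  finally show ?thesis .
qed

definition sqi :: "'a measure \<Rightarrow> ('a \<Rightarrow> real) \<Rightarrow> bool" where
  "sqi M f \<longleftrightarrow> f \<in> borel_measurable M \<and> integrable M (\<lambda>x. (f x)\<^sup>2)"

lemma abs_le_sq: "\<bar>a::real\<bar> \<le> 1 + a\<^sup>2"
proof (cases "\<bar>a\<bar> \<le> 1")
  case True then show ?thesis by (simp add: add_increasing2)
next
  case False
  then have "\<bar>a\<bar> * 1 \<le> \<bar>a\<bar> * \<bar>a\<bar>" by (intro mult_left_mono) auto
  then show ?thesis by (simp add: power2_eq_square)
qed

lemma abs_prod_le_sq: "\<bar>a * b::real\<bar> \<le> a\<^sup>2 + b\<^sup>2"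
proof -
  have "0 \<le> (\<bar>a\<bar> - \<bar>b\<bar>)\<^sup>2" by simp
  then have "2 * (\<bar>a\<bar> * \<bar>b\<bar>) \<le> a\<^sup>2 + b\<^sup>2" by (simp add: power2_diff)
  moreover have "0 \<le> \<bar>a\<bar> * \<bar>b\<bar>" by simp
  ultimately show ?thesis unfolding abs_mult by linarith
qed

context prob_space
begin

lemma sqi_int: "sqi M f \<Longrightarrow> integrable M f"
  unfolding sqi_def
  by (rule Bochner_Integration.integrable_bound[of _ "\<lambda>x. 1 + (f x)\<^sup>2"])
     (auto intro!: AE_I2 abs_le_sq)

lemma sqi_mult_int: "sqi M f \<Longrightarrow> sqi M g \<Longrightarrow> integrable M (\<lambda>x. f x * g x)"
  unfolding sqi_def
  by (rule Bochner_Integration.integrable_bound[of _ "\<lambda>x. (f x)\<^sup>2 + (g x)\<^sup>2"])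
     (auto intro!: AE_I2 abs_prod_le_sq)

lemma sqi_const: "sqi M (\<lambda>x. c)"
  unfolding sqi_def by auto

lemma sqi_diff: "sqi M f \<Longrightarrow> sqi M g \<Longrightarrow> sqi M (\<lambda>x. f x - g x)"
proof -
  assume a: "sqi M f" "sqi M g"
  have "integrable M (\<lambda>x. (f x)\<^sup>2 + (g x)\<^sup>2 - 2 * (f x * g x))"
    using a sqi_mult_int[OF a] unfolding sqi_def by auto
  then show ?thesis using a unfolding sqi_def by (auto simp: power2_diff mult.assoc intro: borel_measurable_diff)
qed

lemma sqi_mult: "sqi M (\<lambda>x. (f x)\<^sup>2) \<Longrightarrow> sqi M (\<lambda>x. (g x)\<^sup>2) \<Longrightarrow> f \<in> borel_measurable M
  \<Longrightarrow> g \<in> borel_measurable M \<Longrightarrow> sqi M (\<lambda>x. f x * g x)"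
  using sqi_mult_int[of "\<lambda>x. (f x)\<^sup>2" "\<lambda>x. (g x)\<^sup>2"] unfolding sqi_def
  by (simp add: power_mult_distrib)

lemma sqi_of4: "f \<in> borel_measurable M \<Longrightarrow> integrable M (\<lambda>x. (f x)^4) \<Longrightarrow> sqi M f \<and> sqi M (\<lambda>x. (f x)\<^sup>2)"
proof -
  assume m: "f \<in> borel_measurable M" and i: "integrable M (\<lambda>x. (f x)^4)"
  have s2: "sqi M (\<lambda>x. (f x)\<^sup>2)" using m i unfolding sqi_def
    by (simp add: power_mult[symmetric])
  then have "integrable M (\<lambda>x. (f x)\<^sup>2)" by (rule sqi_int)
  then show ?thesis using s2 m unfolding sqi_def by simp
qed

lemma indep_prod:
  fixes e :: "nat \<Rightarrow> 'a \<Rightarrow> real" and g :: "real \<Rightarrow> real" and h :: "(nat \<Rightarrow> real) \<Rightarrow> real"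
  assumes ind: "indep_vars (\<lambda>_. borel) e I" and i: "i \<in> I" "J \<subseteq> I" "i \<notin> J"
   and g: "g \<in> borel_measurable borel" and h: "h \<in> borel_measurable (PiM J (\<lambda>_. borel))"
   and ig: "integrable M (\<lambda>\<omega>. g (e i \<omega>))" and ih: "integrable M (\<lambda>\<omega>. h (\<lambda>l\<in>J. e l \<omega>))"
  shows "expectation (\<lambda>\<omega>. g (e i \<omega>) * h (\<lambda>l\<in>J. e l \<omega>))
     = expectation (\<lambda>\<omega>. g (e i \<omega>)) * expectation (\<lambda>\<omega>. h (\<lambda>l\<in>J. e l \<omega>))"
proof -
  have m1: "(\<lambda>x. g (x i)) \<in> borel_measurable (PiM {i} (\<lambda>_. borel))"
    by (rule measurable_compose[OF measurable_component_singleton[of i "{i}" "\<lambda>_. borel"] g]) simp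
  have 1: "indep_var (PiM {i} (\<lambda>_. borel)) (\<lambda>\<omega>. restrict (\<lambda>l. e l \<omega>) {i})
     (PiM J (\<lambda>_. borel)) (\<lambda>\<omega>. restrict (\<lambda>l. e l \<omega>) J)"
    by (rule indep_var_restrict[OF ind]) (use i in auto)
  have 2: "indep_var borel ((\<lambda>x. g (x i)) \<circ> (\<lambda>\<omega>. restrict (\<lambda>l. e l \<omega>) {i})) borel
     (h \<circ> (\<lambda>\<omega>. restrict (\<lambda>l. e l \<omega>) J))"
    by (rule indep_var_compose[OF 1 m1 h])
  have 3: "((\<lambda>x. g (x i)) \<circ> (\<lambda>\<omega>. restrict (\<lambda>l. e l \<omega>) {i})) = (\<lambda>\<omega>. g (e i \<omega>))"
    by (auto simp: fun_eq_iff)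
  have 4: "(h \<circ> (\<lambda>\<omega>. restrict (\<lambda>l. e l \<omega>) J)) = (\<lambda>\<omega>. h (\<lambda>l\<in>J. e l \<omega>))"
    by (simp add: comp_def)
  show ?thesis
    by (rule indep_var_lebesgue_integral[OF 2[unfolded 3 4] ig ih])
qed

end

definition fpair :: "(nat \<Rightarrow> 'a \<Rightarrow> real) \<Rightarrow> real \<Rightarrow> nat \<times> nat \<Rightarrow> 'a \<Rightarrow> real" where
  "fpair e s p \<omega> = (if fst p = snd p then (e (fst p) \<omega>)\<^sup>2 - s else e (fst p) \<omega> * e (snd p) \<omega>)"

context prob_space
begin

context
  fixes e :: "nat \<Rightarrow> 'a \<Rightarrow> real" and I :: "nat set" and s :: real and mu :: "nat \<Rightarrow> real"
  assumes finI: "finite I" and meas: "\<And>j. j \<in> I \<Longrightarrow> e j \<in> borel_measurable M"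
    and ind: "indep_vars (\<lambda>_. borel) e I"
    and m0: "\<And>j. j \<in> I \<Longrightarrow> expectation (e j) = 0"
    and m2: "\<And>j. j \<in> I \<Longrightarrow> expectation (\<lambda>x. (e j x)\<^sup>2) = s"
    and i4: "\<And>j. j \<in> I \<Longrightarrow> integrable M (\<lambda>x. (e j x)^4)"
    and m4: "\<And>j. j \<in> I \<Longrightarrow> expectation (\<lambda>x. (e j x)^4) = mu j"
begin

lemma sqe: "j \<in> I \<Longrightarrow> sqi M (e j)" and sqe_sq: "j \<in> I \<Longrightarrow> sqi M (\<lambda>x. (e j x)\<^sup>2)"
  using sqi_of4[OF meas i4] by auto

lemma sqe2: "j \<in> I \<Longrightarrow> k \<in> I \<Longrightarrow> sqi M (\<lambda>x. e j x * e k x)"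
  by (rule sqi_mult[OF sqe_sq sqe_sq meas meas])

lemma sqd: "j \<in> I \<Longrightarrow> sqi M (\<lambda>x. (e j x)\<^sup>2 - s)"
  by (rule sqi_diff[OF sqe_sq sqi_const])

lemma int_sq: "j \<in> I \<Longrightarrow> integrable M (\<lambda>x. (e j x)\<^sup>2)"
  by (rule sqi_int[OF sqe_sq])

lemma ind0:
  fixes g :: "real \<Rightarrow> real" and h :: "(nat \<Rightarrow> real) \<Rightarrow> real"
  assumes "i \<in> I" "J \<subseteq> I" "i \<notin> J" "g \<in> borel_measurable borel"
    "h \<in> borel_measurable (PiM J (\<lambda>_. borel))"
    "integrable M (\<lambda>\<omega>. g (e i \<omega>))" "integrable M (\<lambda>\<omega>. h (\<lambda>l\<in>J. e l \<omega>))"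
    "expectation (\<lambda>\<omega>. g (e i \<omega>)) = 0"
    "\<And>\<omega>. F \<omega> = g (e i \<omega>) * h (\<lambda>l\<in>J. e l \<omega>)"
  shows "expectation F = 0"
proof -
  have F: "F = (\<lambda>\<omega>. g (e i \<omega>) * h (\<lambda>l\<in>J. e l \<omega>))" using assms(9) by auto
  have "expectation F = expectation (\<lambda>\<omega>. g (e i \<omega>)) * expectation (\<lambda>\<omega>. h (\<lambda>l\<in>J. e l \<omega>))"
    unfolding F by (rule indep_prod[OF ind assms(1-7)])
  then show ?thesis using assms(8) by simp
qed

lemma orth_dd: "j \<in> I \<Longrightarrow> l \<in> I \<Longrightarrow> j \<noteq> l \<Longrightarrow>
   expectation (\<lambda>\<omega>. ((e j \<omega>)\<^sup>2 - s) * ((e l \<omega>)\<^sup>2 - s)) = 0"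
proof -
  assume a: "j \<in> I" "l \<in> I" "j \<noteq> l"
  show ?thesis
  proof (rule ind0[of j "{l}" "\<lambda>x. x\<^sup>2 - s" "\<lambda>y. (y l)\<^sup>2 - s"])
    show "integrable M (\<lambda>\<omega>. (e j \<omega>)\<^sup>2 - s)" using sqi_int[OF sqd[OF a(1)]] .
    show "integrable M (\<lambda>\<omega>. ((\<lambda>l'\<in>{l}. e l' \<omega>) l)\<^sup>2 - s)" using sqi_int[OF sqd[OF a(2)]] by simp
    show "expectation (\<lambda>\<omega>. (e j \<omega>)\<^sup>2 - s) = 0"
      using Bochner_Integration.integral_diff[OF int_sq[OF a(1)] integrable_const[of s]] m2[OF a(1)]
      by (simp add: prob_space)
  qed (use a in \<open>auto\<close>)
qed

lemma orth_do: "j \<in> I \<Longrightarrow> l \<in> I \<Longrightarrow> m \<in> I \<Longrightarrow> l < m \<Longrightarrow>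
   expectation (\<lambda>\<omega>. ((e j \<omega>)\<^sup>2 - s) * (e l \<omega> * e m \<omega>)) = 0"
proof (cases "l = j")
  case False
  assume a: "j \<in> I" "l \<in> I" "m \<in> I" "l < m"
  show ?thesis
  proof (rule ind0[of l "{j,m}" "\<lambda>x. x" "\<lambda>y. ((y j)\<^sup>2 - s) * y m"])
    show "integrable M (\<lambda>\<omega>. e l \<omega>)" using sqi_int[OF sqe[OF a(2)]] .
    show "integrable M (\<lambda>\<omega>. (((\<lambda>l'\<in>{j,m}. e l' \<omega>) j)\<^sup>2 - s) * (\<lambda>l'\<in>{j,m}. e l' \<omega>) m)"
      using sqi_mult_int[OF sqd[OF a(1)] sqe[OF a(3)]] by simp
    show "expectation (\<lambda>\<omega>. e l \<omega>) = 0" using m0[OF a(2)] by simp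
  qed (use a False in \<open>auto\<close>)
next
  case True
  assume a: "j \<in> I" "l \<in> I" "m \<in> I" "l < m"
  show ?thesis
  proof (rule ind0[of m "{j}" "\<lambda>x. x" "\<lambda>y. ((y j)\<^sup>2 - s) * y j"])
    show "integrable M (\<lambda>\<omega>. e m \<omega>)" using sqi_int[OF sqe[OF a(3)]] .
    show "integrable M (\<lambda>\<omega>. (((\<lambda>l'\<in>{j}. e l' \<omega>) j)\<^sup>2 - s) * (\<lambda>l'\<in>{j}. e l' \<omega>) j)"
      using sqi_mult_int[OF sqd[OF a(1)] sqe[OF a(1)]] by simp
    show "expectation (\<lambda>\<omega>. e m \<omega>) = 0" using m0[OF a(3)] by simp
  qed (use a True in \<open>auto\<close>)
qed

lemma orth_oo: "j \<in> I \<Longrightarrow> k \<in> I \<Longrightarrow> l \<in> I \<Longrightarrow> m \<in> I \<Longrightarrow> j < k \<Longrightarrow> l < m \<Longrightarrow> (j,k) \<noteq> (l,m) \<Longrightarrow>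
   expectation (\<lambda>\<omega>. (e j \<omega> * e k \<omega>) * (e l \<omega> * e m \<omega>)) = 0"
proof (cases "j \<notin> {l,m}")
  case True
  assume a: "j \<in> I" "k \<in> I" "l \<in> I" "m \<in> I" "j < k" "l < m" "(j,k) \<noteq> (l,m)"
  show ?thesis
  proof (rule ind0[of j "{k,l,m}" "\<lambda>x. x" "\<lambda>y. y k * (y l * y m)"])
    show "integrable M (\<lambda>\<omega>. e j \<omega>)" using sqi_int[OF sqe[OF a(1)]] .
    show "integrable M (\<lambda>\<omega>. (\<lambda>l'\<in>{k,l,m}. e l' \<omega>) k * ((\<lambda>l'\<in>{k,l,m}. e l' \<omega>) l * (\<lambda>l'\<in>{k,l,m}. e l' \<omega>) m))"
      using sqi_mult_int[OF sqe[OF a(2)] sqe2[OF a(3,4)]] by simp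
    show "expectation (\<lambda>\<omega>. e j \<omega>) = 0" using m0[OF a(1)] by simp
  qed (use a True in \<open>auto\<close>)
next
  case False
  assume a: "j \<in> I" "k \<in> I" "l \<in> I" "m \<in> I" "j < k" "l < m" "(j,k) \<noteq> (l,m)"
  then have k: "k \<notin> {l,m}" using False by auto
  show ?thesis
  proof (rule ind0[of k "{j,l,m}" "\<lambda>x. x" "\<lambda>y. y j * (y l * y m)"])
    show "integrable M (\<lambda>\<omega>. e k \<omega>)" using sqi_int[OF sqe[OF a(2)]] .
    show "integrable M (\<lambda>\<omega>. (\<lambda>l'\<in>{j,l,m}. e l' \<omega>) j * ((\<lambda>l'\<in>{j,l,m}. e l' \<omega>) l * (\<lambda>l'\<in>{j,l,m}. e l' \<omega>) m))"
      using sqi_mult_int[OF sqe[OF a(1)] sqe2[OF a(3,4)]] by simp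
    show "expectation (\<lambda>\<omega>. e k \<omega>) = 0" using m0[OF a(2)] by simp
  qed (use a k in \<open>auto\<close>)
qed

lemma Pairs_memE: "p \<in> Pairs I \<Longrightarrow> (\<And>j k. p = (j,k) \<Longrightarrow> j \<in> I \<Longrightarrow> k \<in> I \<Longrightarrow> j \<le> k \<Longrightarrow> P) \<Longrightarrow> P"
  unfolding Pairs_def by auto

lemma fpair_sqi: "p \<in> Pairs I \<Longrightarrow> sqi M (fpair e s p)"
proof (erule Pairs_memE)
  fix j k assume p: "p = (j,k)" "j \<in> I" "k \<in> I"
  show "sqi M (fpair e s p)"
  proof (cases "j = k")
    case True
    then have "fpair e s p = (\<lambda>x. (e j x)\<^sup>2 - s)" using p by (simp add: fun_eq_iff fpair_def)
    then show ?thesis using sqd[OF p(2)] by simp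
  next
    case False
    then have "fpair e s p = (\<lambda>x. e j x * e k x)" using p by (simp add: fun_eq_iff fpair_def)
    then show ?thesis using sqe2[OF p(2,3)] by simp
  qed
qed

lemma fpair_E0: "p \<in> Pairs I \<Longrightarrow> expectation (fpair e s p) = 0"
proof (erule Pairs_memE)
  fix j k assume p: "p = (j,k)" "j \<in> I" "k \<in> I" "j \<le> k"
  show "expectation (fpair e s p) = 0"
  proof (cases "j = k")
    case True
    then have "fpair e s p = (\<lambda>x. (e j x)\<^sup>2 - s)" using p by (simp add: fun_eq_iff fpair_def)
    then show ?thesis
      using Bochner_Integration.integral_diff[OF int_sq[OF p(2)] integrable_const[of s]] m2[OF p(2)]
      by (simp add: prob_space)
  next
    case False
    show ?thesis
    proof (rule ind0[of j "{k}" "\<lambda>x. x" "\<lambda>y. y k"])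
      show "integrable M (\<lambda>\<omega>. e j \<omega>)" using sqi_int[OF sqe[OF p(2)]] .
      show "integrable M (\<lambda>\<omega>. (\<lambda>l'\<in>{k}. e l' \<omega>) k)" using sqi_int[OF sqe[OF p(3)]] by simp
      show "expectation (\<lambda>\<omega>. e j \<omega>) = 0" using m0[OF p(2)] by simp
    qed (use p False in \<open>auto simp: fpair_def\<close>)
  qed
qed

lemma fpair_sq: "p \<in> Pairs I \<Longrightarrow> expectation (\<lambda>\<omega>. fpair e s p \<omega> * fpair e s p \<omega>)
   = (if fst p = snd p then mu (fst p) - s\<^sup>2 else s\<^sup>2)"
proof (erule Pairs_memE)
  fix j k assume p: "p = (j,k)" "j \<in> I" "k \<in> I" "j \<le> k"
  show "expectation (\<lambda>\<omega>. fpair e s p \<omega> * fpair e s p \<omega>)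
   = (if fst p = snd p then mu (fst p) - s\<^sup>2 else s\<^sup>2)"
  proof (cases "j = k")
    case True
    then have "(\<lambda>\<omega>. fpair e s p \<omega> * fpair e s p \<omega>) = (\<lambda>x. (e j x)^4 - (2 * s) * (e j x)\<^sup>2 + s\<^sup>2)"
      using p by (simp add: fun_eq_iff fpair_def power2_eq_square algebra_simps
         power4_eq_xxxx)
    moreover have "expectation (\<lambda>x. (e j x)^4 - (2 * s) * (e j x)\<^sup>2 + s\<^sup>2) = mu j - 2 * s * s + s\<^sup>2"
      using i4[OF p(2)] int_sq[OF p(2)] m2[OF p(2)] m4[OF p(2)]
      by (simp add: prob_space)
    ultimately show ?thesis using True p by (simp add: power2_eq_square)
  next
    case False
    have "expectation (\<lambda>\<omega>. (e j \<omega>)\<^sup>2 * ((\<lambda>l'\<in>{k}. e l' \<omega>) k)\<^sup>2)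
      = expectation (\<lambda>\<omega>. (e j \<omega>)\<^sup>2) * expectation (\<lambda>\<omega>. ((\<lambda>l'\<in>{k}. e l' \<omega>) k)\<^sup>2)"
    proof (rule indep_prod[OF ind, of j "{k}" "\<lambda>x. x\<^sup>2" "\<lambda>y. (y k)\<^sup>2"])
      show "integrable M (\<lambda>\<omega>. ((\<lambda>l'\<in>{k}. e l' \<omega>) k)\<^sup>2)" using int_sq[OF p(3)] by simp
    qed (use p False int_sq in \<open>auto\<close>)
    moreover have "(\<lambda>\<omega>. fpair e s p \<omega> * fpair e s p \<omega>) = (\<lambda>\<omega>. (e j \<omega>)\<^sup>2 * ((\<lambda>l'\<in>{k}. e l' \<omega>) k)\<^sup>2)"
      using p False by (simp add: fun_eq_iff fpair_def power2_eq_square algebra_simps)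
    ultimately show ?thesis using p False m2 by (simp add: power2_eq_square)
  qed
qed

lemma fpair_orth: "p \<in> Pairs I \<Longrightarrow> q \<in> Pairs I \<Longrightarrow> p \<noteq> q \<Longrightarrow>
   expectation (\<lambda>\<omega>. fpair e s p \<omega> * fpair e s q \<omega>) = 0"
proof (erule Pairs_memE, erule Pairs_memE)
  fix j k l m assume p: "p = (j,k)" "j \<in> I" "k \<in> I" "j \<le> k"
    and q: "q = (l,m)" "l \<in> I" "m \<in> I" "l \<le> m" and pq: "p \<noteq> q"
  show "expectation (\<lambda>\<omega>. fpair e s p \<omega> * fpair e s q \<omega>) = 0"
  proof (cases "j = k")
    case jk: True
    show ?thesis
    proof (cases "l = m")
      case True
      then show ?thesis using orth_dd[OF p(2) q(2)] p q pq jk by (simp add: fpair_def)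
    next
      case False
      then show ?thesis using orth_do[OF p(2) q(2) q(3)] p q pq jk by (simp add: fpair_def)
    qed
  next
    case jk: False
    show ?thesis
    proof (cases "l = m")
      case True
      have "(\<lambda>\<omega>. fpair e s p \<omega> * fpair e s q \<omega>) = (\<lambda>\<omega>. ((e l \<omega>)\<^sup>2 - s) * (e j \<omega> * e k \<omega>))"
        using p q True jk by (simp add: fpair_def fun_eq_iff)
      then show ?thesis using orth_do[OF q(2) p(2) p(3)] p jk by simp
    next
      case False
      then show ?thesis using orth_oo[OF p(2,3) q(2,3)] p q pq jk by (simp add: fpair_def)
    qed
  qed
qed

lemma var_quad:
  "variance (\<lambda>\<omega>. \<Sum>j\<in>I. \<Sum>k\<in>I. A j k * e j \<omega> * e k \<omega>)
    = (\<Sum>p\<in>Pairs I. (wpair A p)\<^sup>2 * (if fst p = snd p then mu (fst p) - s\<^sup>2 else s\<^sup>2))"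
proof -
  define R where "R = (\<lambda>\<omega>. \<Sum>p\<in>Pairs I. wpair A p * fpair e s p \<omega>)"
  define c where "c = s * (\<Sum>j\<in>I. A j j)"
  have Q: "(\<lambda>\<omega>. \<Sum>j\<in>I. \<Sum>k\<in>I. A j k * e j \<omega> * e k \<omega>) = (\<lambda>\<omega>. R \<omega> + c)"
  proof
    fix \<omega>
    show "(\<Sum>j\<in>I. \<Sum>k\<in>I. A j k * e j \<omega> * e k \<omega>) = R \<omega> + c"
      using quad_split[OF finI, of A "\<lambda>j. e j \<omega>" s] unfolding R_def c_def fpair_def by simp
  qed
  have fin: "finite (Pairs I)" using finI by (rule finite_Pairs)
  have intf: "\<And>p. p \<in> Pairs I \<Longrightarrow> integrable M (fpair e s p)"
    using fpair_sqi sqi_int by blast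
  have intff: "\<And>p q. p \<in> Pairs I \<Longrightarrow> q \<in> Pairs I \<Longrightarrow> integrable M (\<lambda>\<omega>. fpair e s p \<omega> * fpair e s q \<omega>)"
    using fpair_sqi sqi_mult_int by blast
  have intR: "integrable M R" unfolding R_def using intf by auto
  have ER: "expectation R = 0"
    unfolding R_def using intf fpair_E0 by (simp add: Bochner_Integration.integral_sum)
  have EQ: "expectation (\<lambda>\<omega>. R \<omega> + c) = c"
    using Bochner_Integration.integral_add[OF intR integrable_const[of c]] ER by (simp add: prob_space)
  have R2: "\<And>\<omega>. (R \<omega>)\<^sup>2 = (\<Sum>p\<in>Pairs I. \<Sum>q\<in>Pairs I. wpair A p * wpair A q * (fpair e s p \<omega> * fpair e s q \<omega>))"
    unfolding R_def power2_eq_square sum_product by (simp add: algebra_simps)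
  have "variance (\<lambda>\<omega>. \<Sum>j\<in>I. \<Sum>k\<in>I. A j k * e j \<omega> * e k \<omega>) = expectation (\<lambda>\<omega>. (R \<omega>)\<^sup>2)"
    using fun_cong[OF Q] EQ by simp
  also have "\<dots> = (\<Sum>p\<in>Pairs I. \<Sum>q\<in>Pairs I. wpair A p * wpair A q * expectation (\<lambda>\<omega>. fpair e s p \<omega> * fpair e s q \<omega>))"
    unfolding R2 using intff by (simp add: Bochner_Integration.integral_sum)
  also have "\<dots> = (\<Sum>p\<in>Pairs I. \<Sum>q\<in>Pairs I. if q = p then wpair A p * wpair A p * (if fst p = snd p then mu (fst p) - s\<^sup>2 else s\<^sup>2) else 0)"
    by (intro sum.cong refl) (auto simp: fpair_sq fpair_orth)
  also have "\<dots> = (\<Sum>p\<in>Pairs I. (wpair A p)\<^sup>2 * (if fst p = snd p then mu (fst p) - s\<^sup>2 else s\<^sup>2))"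
    using fin by (simp add: power2_eq_square)
  finally show ?thesis .
qed

end
end

lemma gauss_facts:
  assumes N: "prob_space N" and g: "gaussian_rv N X \<sigma>" and s: "\<sigma> \<ge> 0"
    and X: "X \<in> borel_measurable N"
  shows "integrable N (\<lambda>x. (X x) ^ 4) \<and> prob_space.expectation N X = 0
    \<and> prob_space.expectation N (\<lambda>x. (X x)\<^sup>2) = \<sigma>\<^sup>2
    \<and> prob_space.expectation N (\<lambda>x. (X x)^4) = 3 * \<sigma>^4"
proof (cases "\<sigma> = 0")
  case True
  then have D: "distr N lborel X = return lborel 0" using g by (simp add: gaussian_rv_def)
  have Xl: "X \<in> measurable N lborel" using X by simp
  have I: "\<And>k::nat. integral\<^sup>L N (\<lambda>x. (X x) ^ k) = 0 ^ k"
  proof -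
    fix k :: nat
    have "integral\<^sup>L N (\<lambda>x. (X x) ^ k) = integral\<^sup>L (distr N lborel X) (\<lambda>x. x ^ k)"
      by (subst integral_distr[OF Xl]) auto
    also have "\<dots> = 0 ^ k" unfolding D by (subst integral_return) auto
    finally show "integral\<^sup>L N (\<lambda>x. (X x) ^ k) = 0 ^ k" .
  qed
  have "integrable (distr N lborel X) (\<lambda>x::real. x ^ 4)"
    unfolding D by (simp add: integrable_iff_bounded nn_integral_return)
  then have "integrable N (\<lambda>x. (X x) ^ 4)"
    by (subst (asm) integrable_distr_eq[OF Xl]) auto
  moreover have "prob_space.expectation N X = 0" using I[of 1] by simp
  ultimately show ?thesis using I[of 2] I[of 4] True by simp
next
  case False
  then have sp: "\<sigma> > 0" using s by simp
  then have D: "distributed N lborel X (normal_density 0 \<sigma>)" using g by (simp add: gaussian_rv_def)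
  have I: "\<And>k::nat. integral\<^sup>L N (\<lambda>x. (X x) ^ k) = integral\<^sup>L lborel (\<lambda>x. normal_density 0 \<sigma> x * (x - 0) ^ k)"
    by (subst distributed_integral[OF D, symmetric]) auto
  have "integrable lborel (\<lambda>x. normal_density 0 \<sigma> x * (x - 0) ^ 4)"
    by (rule integrable_normal_moment[OF sp])
  then have "integrable N (\<lambda>x. (X x) ^ 4)"
    using distributed_integrable[OF D, of "\<lambda>x. x^4"] by auto
  moreover have "prob_space.expectation N X = 0"
    using prob_space.normal_distributed_expectation[OF N sp D] .
  moreover have "prob_space.expectation N (\<lambda>x. (X x)\<^sup>2) = \<sigma>\<^sup>2"
    using I[of 2] integral_normal_moment_even[OF sp, where k=1 and \<mu>=0]
    by (simp add: fact_numeral power2_eq_square)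
  moreover have "prob_space.expectation N (\<lambda>x. (X x)^4) = 3 * \<sigma>^4"
    using I[of 4] integral_normal_moment_even[OF sp, where k=2 and \<mu>=0]
    by (simp add: fact_numeral field_simps)
  ultimately show ?thesis by blast
qed

fun cX :: "real \<Rightarrow> real \<Rightarrow> nat \<Rightarrow> nat \<Rightarrow> real" where
  "cX \<eta> \<alpha> 0 j = 0"
| "cX \<eta> \<alpha> (Suc i) j = (1 - step \<eta> \<alpha> (Suc i)) * cX \<eta> \<alpha> i j + (if j = Suc i then step \<eta> \<alpha> (Suc i) else 0)"

lemma Xlin: "i \<le> n \<Longrightarrow> Xseq \<eta> \<alpha> e i \<omega> = (\<Sum>j\<in>{1..n}. cX \<eta> \<alpha> i j * e j \<omega>)"
proof (induction i)
  case 0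
  then show ?case by simp
next
  case (Suc i)
  let ?st = "step \<eta> \<alpha> (Suc i)"
  have d: "(\<Sum>j\<in>{1..n}. (if j = Suc i then ?st else 0) * e j \<omega>) = ?st * e (Suc i) \<omega>"
  proof -
    have "(\<Sum>j\<in>{1..n}. (if j = Suc i then ?st else 0) * e j \<omega>) = (\<Sum>j\<in>{1..n}. if j = Suc i then ?st * e j \<omega> else 0)"
      by (rule sum.cong) auto
    also have "\<dots> = ?st * e (Suc i) \<omega>" using Suc.prems by simp
    finally show ?thesis .
  qed
  have "Xseq \<eta> \<alpha> e (Suc i) \<omega> = (1 - ?st) * (\<Sum>j\<in>{1..n}. cX \<eta> \<alpha> i j * e j \<omega>) + ?st * e (Suc i) \<omega>"
    using Suc by simp
  also have "\<dots> = (\<Sum>j\<in>{1..n}. cX \<eta> \<alpha> (Suc i) j * e j \<omega>)"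
    unfolding d[symmetric] sum_distrib_left sum.distrib[symmetric]
    by (rule sum.cong[OF refl]) (simp add: algebra_simps)
  finally show ?case .
qed

lemma triple_swap: "(\<Sum>i\<in>S. \<Sum>j\<in>T. \<Sum>k\<in>U. f i j k) = (\<Sum>j\<in>T. \<Sum>k\<in>U. \<Sum>i\<in>S. f i j k)"
proof -
  have "(\<Sum>i\<in>S. \<Sum>j\<in>T. \<Sum>k\<in>U. f i j k) = (\<Sum>j\<in>T. \<Sum>i\<in>S. \<Sum>k\<in>U. f i j k)"
    by (rule sum.swap)
  also have "\<dots> = (\<Sum>j\<in>T. \<Sum>k\<in>U. \<Sum>i\<in>S. f i j k)"
    by (rule sum.cong[OF refl], rule sum.swap)
  finally show ?thesis .
qed

lemma quad_alg:
  fixes a x :: "nat \<Rightarrow> real" and b :: "nat \<Rightarrow> nat \<Rightarrow> real"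
  shows "(\<Sum>j\<in>S. a j * x j)\<^sup>2 + 2 * (\<Sum>j\<in>S. a j * x j) * (\<Sum>l\<in>L. \<Sum>k\<in>S. b l k * x k)
    = (\<Sum>j\<in>S. \<Sum>k\<in>S. (a j * a k + 2 * a j * (\<Sum>l\<in>L. b l k)) * x j * x k)"
proof -
  define B where "B k = (\<Sum>l\<in>L. b l k)" for k
  have 1: "(\<Sum>l\<in>L. \<Sum>k\<in>S. b l k * x k) = (\<Sum>k\<in>S. B k * x k)"
    unfolding B_def by (subst sum.swap) (simp add: sum_distrib_right)
  have 2: "2 * (\<Sum>j\<in>S. a j * x j) * (\<Sum>k\<in>S. B k * x k) = (\<Sum>j\<in>S. \<Sum>k\<in>S. 2 * a j * B k * x j * x k)"
  proof -
    have "2 * (\<Sum>j\<in>S. a j * x j) * (\<Sum>k\<in>S. B k * x k) = 2 * ((\<Sum>j\<in>S. a j * x j) * (\<Sum>k\<in>S. B k * x k))"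
      by simp
    also have "\<dots> = (\<Sum>j\<in>S. \<Sum>k\<in>S. 2 * ((a j * x j) * (B k * x k)))"
      unfolding sum_product by (simp only: sum_distrib_left)
    finally show ?thesis by (simp add: algebra_simps)
  qed
  have 3: "(\<Sum>j\<in>S. a j * x j)\<^sup>2 = (\<Sum>j\<in>S. \<Sum>k\<in>S. a j * a k * x j * x k)"
    unfolding power2_eq_square sum_product by (simp add: algebra_simps)
  show ?thesis
    unfolding 1 2 3 B_def[symmetric] sum.distrib[symmetric]
    by (rule sum.cong[OF refl], rule sum.cong[OF refl]) (simp add: algebra_simps)
qed

lemma final_alg:
  fixes G :: "nat \<Rightarrow> nat \<Rightarrow> nat \<Rightarrow> real" and y :: "nat \<Rightarrow> real"
  shows "c * (\<Sum>i\<in>S. \<Sum>j\<in>S. \<Sum>k\<in>S. G i j k * y j * y k) = (\<Sum>j\<in>S. \<Sum>k\<in>S. (c * (\<Sum>i\<in>S. G i j k)) * y j * y k)"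
proof -
  have "c * (\<Sum>i\<in>S. \<Sum>j\<in>S. \<Sum>k\<in>S. G i j k * y j * y k) = c * (\<Sum>j\<in>S. \<Sum>k\<in>S. \<Sum>i\<in>S. G i j k * y j * y k)"
    unfolding triple_swap[of "\<lambda>i j k. G i j k * y j * y k" S S S] ..
  also have "\<dots> = c * (\<Sum>j\<in>S. \<Sum>k\<in>S. (\<Sum>i\<in>S. G i j k) * y j * y k)"
    by (simp only: sum_distrib_right)
  also have "\<dots> = (\<Sum>j\<in>S. \<Sum>k\<in>S. c * ((\<Sum>i\<in>S. G i j k) * y j * y k))"
    by (simp only: sum_distrib_left)
  also have "\<dots> = (\<Sum>j\<in>S. \<Sum>k\<in>S. (c * (\<Sum>i\<in>S. G i j k)) * y j * y k)"
    by (simp only: mult.assoc)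
  finally show ?thesis .
qed

definition Acoef :: "real \<Rightarrow> real \<Rightarrow> (nat \<Rightarrow> nat) \<Rightarrow> nat \<Rightarrow> nat \<Rightarrow> nat \<Rightarrow> real" where
  "Acoef \<eta> \<alpha> t n j k = (1 / real n) * (\<Sum>i\<in>{1..n}. cX \<eta> \<alpha> i j * cX \<eta> \<alpha> i k
      + 2 * cX \<eta> \<alpha> i j * (\<Sum>l\<in>{t i..<i}. cX \<eta> \<alpha> l k))"

lemma sigma_quad:
  "sigma_est \<eta> \<alpha> t e n = (\<lambda>\<omega>. \<Sum>j\<in>{1..n}. \<Sum>k\<in>{1..n}. Acoef \<eta> \<alpha> t n j k * e j \<omega> * e k \<omega>)"
proof
  fix \<omega>
  have "\<And>i. i \<in> {1..n} \<Longrightarrow> (Xseq \<eta> \<alpha> e i \<omega>)\<^sup>2 + 2 * Xseq \<eta> \<alpha> e i \<omega> * (\<Sum>j\<in>{t i..<i}. Xseq \<eta> \<alpha> e j \<omega>)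
     = (\<Sum>j\<in>{1..n}. \<Sum>k\<in>{1..n}. (cX \<eta> \<alpha> i j * cX \<eta> \<alpha> i k + 2 * cX \<eta> \<alpha> i j * (\<Sum>l\<in>{t i..<i}. cX \<eta> \<alpha> l k)) * e j \<omega> * e k \<omega>)"
  proof -
    fix i assume i: "i \<in> {1..n}"
    have h1: "(\<Sum>j\<in>{t i..<i}. Xseq \<eta> \<alpha> e j \<omega>) = (\<Sum>l\<in>{t i..<i}. \<Sum>k\<in>{1..n}. cX \<eta> \<alpha> l k * e k \<omega>)"
      using i by (intro sum.cong refl Xlin) auto
    have h2: "Xseq \<eta> \<alpha> e i \<omega> = (\<Sum>j\<in>{1..n}. cX \<eta> \<alpha> i j * e j \<omega>)" using i by (intro Xlin) auto
    show "?thesis i" unfolding h1 h2 by (rule quad_alg)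
  qed
  then have S: "(\<Sum>i\<in>{1..n}. (Xseq \<eta> \<alpha> e i \<omega>)\<^sup>2 + 2 * Xseq \<eta> \<alpha> e i \<omega> * (\<Sum>j\<in>{t i..<i}. Xseq \<eta> \<alpha> e j \<omega>))
    = (\<Sum>i\<in>{1..n}. \<Sum>j\<in>{1..n}. \<Sum>k\<in>{1..n}.
      (cX \<eta> \<alpha> i j * cX \<eta> \<alpha> i k + 2 * cX \<eta> \<alpha> i j * (\<Sum>l\<in>{t i..<i}. cX \<eta> \<alpha> l k)) * e j \<omega> * e k \<omega>)"
    by (rule sum.cong[OF refl])
  have "sigma_est \<eta> \<alpha> t e n \<omega> = (1 / real n) * (\<Sum>i\<in>{1..n}. \<Sum>j\<in>{1..n}. \<Sum>k\<in>{1..n}.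
      (cX \<eta> \<alpha> i j * cX \<eta> \<alpha> i k + 2 * cX \<eta> \<alpha> i j * (\<Sum>l\<in>{t i..<i}. cX \<eta> \<alpha> l k)) * e j \<omega> * e k \<omega>)"
    unfolding sigma_est_def S ..
  also have "\<dots> = (\<Sum>j\<in>{1..n}. \<Sum>k\<in>{1..n}. Acoef \<eta> \<alpha> t n j k * e j \<omega> * e k \<omega>)"
    unfolding Acoef_def by (rule final_alg)
  finally show "sigma_est \<eta> \<alpha> t e n \<omega> = (\<Sum>j\<in>{1..n}. \<Sum>k\<in>{1..n}. Acoef \<eta> \<alpha> t n j k * e j \<omega> * e k \<omega>)" .
qed

lemma term_le:
  fixes v \<mu> \<sigma> :: real
  assumes v: "0 \<le> v" and z: "\<sigma> = 0 \<Longrightarrow> \<mu> = 0"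
  shows "v * (if d then \<mu> - (\<sigma>\<^sup>2)\<^sup>2 else (\<sigma>\<^sup>2)\<^sup>2)
    \<le> (if \<sigma> = 0 then 1 else max 1 (\<mu> / (2 * \<sigma>^4))) * (v * (if d then 3 * \<sigma>^4 - (\<sigma>\<^sup>2)\<^sup>2 else (\<sigma>\<^sup>2)\<^sup>2))"
proof (cases "\<sigma> = 0")
  case True
  then show ?thesis using z by simp
next
  case False
  define q where "q = \<sigma>^4"
  have q: "q > 0" using False unfolding q_def by simp
  have sq: "(\<sigma>\<^sup>2)\<^sup>2 = q" unfolding q_def by simp
  define C where "C = max 1 (\<mu> / (2 * q))"
  have C1: "1 \<le> C" unfolding C_def by simp
  have C2: "\<mu> \<le> C * (2 * q)"
  proof -
    have "\<mu> / (2 * q) \<le> C" unfolding C_def by simp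
    then show ?thesis using q by (simp add: divide_le_eq mult.commute)
  qed
  show ?thesis
  proof (cases d)
    case True
    have "\<mu> - q \<le> C * (2 * q)" using C2 q by linarith
    then have "v * (\<mu> - q) \<le> v * (C * (2 * q))" by (rule mult_left_mono[OF _ v])
    then show ?thesis using True False unfolding sq C_def[symmetric] q_def[symmetric]
      by (simp add: algebra_simps)
  next
    case dF: False
    have vq: "0 \<le> v * q" using v q by simp
    have "v * q \<le> C * (v * q)" using mult_right_mono[OF C1 vq] by simp
    then show ?thesis using dF False unfolding sq C_def[symmetric] q_def[symmetric] by simp
  qed
qed

theorem lemmaC4:
  fixes M :: "'a measure" and N :: "'b measure"
    and e :: "nat \<Rightarrow> 'a \<Rightarrow> real" and et :: "nat \<Rightarrow> 'b \<Rightarrow> real"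
    and \<eta> \<alpha> \<sigma> :: real and t :: "nat \<Rightarrow> nat"
  assumes "prob_space M" and "prob_space N"
    and "\<eta> > 0" and "1/2 < \<alpha>" and "\<alpha> < 1"
    and "\<sigma> \<ge> 0"
    and "\<And>i. i \<ge> 1 \<Longrightarrow> e i \<in> borel_measurable M"
    and "prob_space.indep_vars M (\<lambda>_. borel) e {1..}"
    and "\<And>i. i \<ge> 1 \<Longrightarrow> distr M borel (e i) = distr M borel (e 1)"
    and "\<And>i. i \<ge> 1 \<Longrightarrow> prob_space.expectation M (e i) = 0"
    and "\<And>i. i \<ge> 1 \<Longrightarrow> prob_space.expectation M (\<lambda>x. (e i x)\<^sup>2) = \<sigma>\<^sup>2"
    and "\<And>i. i \<ge> 1 \<Longrightarrow> integrable M (\<lambda>x. (e i x) ^ 4)"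
    and "\<And>i. i \<ge> 1 \<Longrightarrow> et i \<in> borel_measurable N"
    and "prob_space.indep_vars N (\<lambda>_. borel) et {1..}"
    and "\<And>i. i \<ge> 1 \<Longrightarrow> gaussian_rv N (et i) \<sigma>"
    and "\<And>i. i \<ge> 1 \<Longrightarrow> 1 \<le> t i \<and> t i \<le> i"
  shows "\<exists>C1 C2. 0 \<le> C1 \<and> C1 \<le> C2 \<and>
    (\<forall>n\<ge>1. C1 * prob_space.variance N (sigma_est \<eta> \<alpha> t et n)
                \<le> prob_space.variance M (sigma_est \<eta> \<alpha> t e n)
          \<and> prob_space.variance M (sigma_est \<eta> \<alpha> t e n)
                \<le> C2 * prob_space.variance N (sigma_est \<eta> \<alpha> t et n))"
proof -
  interpret M: prob_space M by fact
  interpret N: prob_space N by fact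
  define \<mu> where "\<mu> = M.expectation (\<lambda>x. (e 1 x)^4)"
  have mu_eq: "M.expectation (\<lambda>x. (e j x)^4) = \<mu>" if j: "j \<ge> 1" for j
  proof -
    have "M.expectation (\<lambda>x. (e j x)^4) = integral\<^sup>L (distr M borel (e j)) (\<lambda>x. x^4)"
      by (rule integral_distr[symmetric]) (use assms(7) j in auto)
    also have "\<dots> = integral\<^sup>L (distr M borel (e 1)) (\<lambda>x. x^4)" using assms(9)[OF j] by simp
    also have "\<dots> = \<mu>" unfolding \<mu>_def
      by (rule integral_distr) (use assms(7) in auto)
    finally show ?thesis .
  qed
  have gf: "integrable N (\<lambda>x. (et i x) ^ 4) \<and> N.expectation (et i) = 0
    \<and> N.expectation (\<lambda>x. (et i x)\<^sup>2) = \<sigma>\<^sup>2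
    \<and> N.expectation (\<lambda>x. (et i x)^4) = 3 * \<sigma>^4" if "i \<ge> 1" for i
    using gauss_facts[OF assms(2) assms(15)[OF that] assms(6) assms(13)[OF that]] .
  have z: "\<mu> = 0" if s0: "\<sigma> = 0"
  proof -
    have s1: "sqi M (\<lambda>x. (e 1 x)\<^sup>2)" using M.sqi_of4[OF assms(7) assms(12)] by auto
    have i2: "integrable M (\<lambda>x. (e 1 x)\<^sup>2)" by (rule M.sqi_int[OF s1])
    have "M.expectation (\<lambda>x. (e 1 x)\<^sup>2) = 0" using assms(11)[of 1] s0 by simp
    then have "AE x in M. (e 1 x)\<^sup>2 = 0"
      using integral_nonneg_eq_0_iff_AE[OF i2] by simp
    then have "AE x in M. (e 1 x)^4 = 0" by eventually_elim simp
    then show ?thesis unfolding \<mu>_def by (rule integral_eq_zero_AE)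
  qed
  define C2 where "C2 = (if \<sigma> = 0 then 1 else max 1 (\<mu> / (2 * \<sigma>^4)))"
  have VM: "M.variance (sigma_est \<eta> \<alpha> t e n) = (\<Sum>p\<in>Pairs {1..n}. (wpair (Acoef \<eta> \<alpha> t n) p)\<^sup>2 *
      (if fst p = snd p then \<mu> - (\<sigma>\<^sup>2)\<^sup>2 else (\<sigma>\<^sup>2)\<^sup>2))" for n
    unfolding sigma_quad
  proof (rule M.var_quad[of "{1..n}" e "\<sigma>\<^sup>2" "\<lambda>_. \<mu>"])
    show "M.indep_vars (\<lambda>_. borel) e {1..n}"
      by (rule M.indep_vars_subset[OF assms(8)]) auto
  qed (use assms(7,10,11,12) mu_eq in auto)
  have VN: "N.variance (sigma_est \<eta> \<alpha> t et n) = (\<Sum>p\<in>Pairs {1..n}. (wpair (Acoef \<eta> \<alpha> t n) p)\<^sup>2 *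
      (if fst p = snd p then 3 * \<sigma>^4 - (\<sigma>\<^sup>2)\<^sup>2 else (\<sigma>\<^sup>2)\<^sup>2))" for n
    unfolding sigma_quad
  proof (rule N.var_quad[of "{1..n}" et "\<sigma>\<^sup>2" "\<lambda>_. 3 * \<sigma>^4"])
    show "N.indep_vars (\<lambda>_. borel) et {1..n}"
      by (rule N.indep_vars_subset[OF assms(14)]) auto
  qed (use assms(13) gf in auto)
  have "0 \<le> (0::real) \<and> 0 \<le> C2 \<and>
    (\<forall>n\<ge>1. 0 * N.variance (sigma_est \<eta> \<alpha> t et n) \<le> M.variance (sigma_est \<eta> \<alpha> t e n)
          \<and> M.variance (sigma_est \<eta> \<alpha> t e n) \<le> C2 * N.variance (sigma_est \<eta> \<alpha> t et n))"
  proof (intro conjI allI impI)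
    show "0 \<le> C2" unfolding C2_def by (simp add: le_max_iff_disj)
  next
    fix n :: nat
    show "0 * N.variance (sigma_est \<eta> \<alpha> t et n) \<le> M.variance (sigma_est \<eta> \<alpha> t e n)" by simp
  next
    fix n :: nat
    show "M.variance (sigma_est \<eta> \<alpha> t e n) \<le> C2 * N.variance (sigma_est \<eta> \<alpha> t et n)"
      unfolding VM VN sum_distrib_left C2_def
      by (rule sum_mono, rule term_le) (use z in auto)
  qed simp
  then show ?thesis by blast
qed

end
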